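(* Let $\mathbb{A}_1\subseteq\cdots\subseteq\mathbb{A}_k$ be a flag of linear subspaces of $\mathbb{R}^n$, $\mathbb{B}\in\Omega(\mathbb{A}_1,\dots,\mathbb{A}_k)$ and $b\in\mathbb{R}^n$. Then the fiber \[ \tau_b^{-1}(\mathbb{B})=\{\mathbb{B}+c\in\mathrm{Graff}(k,n):\dim((\mathbb{B}+c)\cap(\mathbb{A}_j+b))\ge j,\ j=1,\dots,k\} \] is convex (under the identification of the affine subspaces with direction space $\mathbb{B}$ with the quotient vector space $\mathbb{R}^n/\mathbb{B}$ via $\mathbb{B}+c\mapsto c+\mathbb{B}$), and therefore contractible.
   Context: $\mathrm{Graff}(k,n)$ is the set of $k$-dimensional affine subspaces of $\mathbb{R}^n$. $\Omega(\mathbb{A}_1,\dots,\mathbb{A}_k)=\{\mathbb{B}\in\mathrm{Gr}(k,n):\dim(\mathbb{B}\cap\mathbb{A}_j)\ge j,\ j=1,\dots,k\}$. $\tau_b$ is the restriction of $\mathbb{A}+c\mapsto\mathbb{A}$ to the affine Schubert variety $\Psi(\mathbb{A}_1+b,\dots,\mathbb{A}_k+b)=\{\mathbb{B}+c\in\mathrm{Graff}(k,n):\dim((\mathbb{B}+c)\cap(\mathbb{A}_j+b))\ge j,\ j=1,\dots,k\}$, with values in $\Omega(\mathbb{A}_1,\dots,\mathbb{A}_k)$. *)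

theory Defs
  imports "HOL-Analysis.Analysis"
begin

definition Gr :: "nat \<Rightarrow> 'a::euclidean_space set set" where
  "Gr k = {B. subspace B \<and> dim B = k}"

definition Schubert_Omega :: "nat \<Rightarrow> (nat \<Rightarrow> 'a::euclidean_space set) \<Rightarrow> 'a set set" where
  "Schubert_Omega k A = {B \<in> Gr k. \<forall>j\<in>{1..k}. dim (B \<inter> A j) \<ge> j}"

text \<open>The fibre of tau_b over B, described by translation vectors c: the affine
  subspace B + c lies in Psi(A_1 + b, ..., A_k + b). This set is a union of cosets
  c + B, i.e. the preimage of the fibre under the quotient map R^n -> R^n/B.\<close>
definition tau_fiber_vectors ::
  "nat \<Rightarrow> (nat \<Rightarrow> 'a::euclidean_space set) \<Rightarrow> 'a \<Rightarrow> 'a set \<Rightarrow> 'a set" where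
  "tau_fiber_vectors k A b B =
     {c. \<forall>j\<in>{1..k}. aff_dim ((\<lambda>x. x + c) ` B \<inter> (\<lambda>x. x + b) ` A j) \<ge> int j}"

end

theory Submission
  imports Defs
begin

lemma key:
  fixes B A :: "'a::euclidean_space set"
  assumes sB: "subspace B" and sA: "subspace A" and j: "j \<ge> 1" and d: "dim (B \<inter> A) \<ge> j"
  shows "aff_dim ((\<lambda>x. x + c) ` B \<inter> (\<lambda>x. x + b) ` A) \<ge> int j \<longleftrightarrow> c - b \<in> {x + y |x y. x \<in> B \<and> y \<in> A}"
proof
  assume h: "aff_dim ((\<lambda>x. x + c) ` B \<inter> (\<lambda>x. x + b) ` A) \<ge> int j"
  have "(\<lambda>x. x + c) ` B \<inter> (\<lambda>x. x + b) ` A \<noteq> {}"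
  proof
    assume "(\<lambda>x. x + c) ` B \<inter> (\<lambda>x. x + b) ` A = {}"
    then have "aff_dim ((\<lambda>x. x + c) ` B \<inter> (\<lambda>x. x + b) ` A) = -1" by simp
    with h j show False by simp
  qed
  then obtain x y where x: "x \<in> B" and y: "y \<in> A" and e: "x + c = y + b" by blast
  have "c - b = (- x) + y" using e by (simp add: algebra_simps)
  moreover have "- x \<in> B" using sB x by (simp add: subspace_neg)
  ultimately show "c - b \<in> {x + y |x y. x \<in> B \<and> y \<in> A}" using y by blast
next
  assume "c - b \<in> {x + y |x y. x \<in> B \<and> y \<in> A}"
  then obtain x y where x: "x \<in> B" and y: "y \<in> A" and e: "c - b = x + y" by blast
  define p where "p = b + y"
  have eq: "(\<lambda>x. x + c) ` B \<inter> (\<lambda>x. x + b) ` A = (+) p ` (B \<inter> A)"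
  proof (intro set_eqI iffI)
    fix z assume "z \<in> (\<lambda>x. x + c) ` B \<inter> (\<lambda>x. x + b) ` A"
    then obtain u v where u: "u \<in> B" and v: "v \<in> A" and zu: "z = u + c" and zv: "z = v + b" by blast
    have "z - p = u + x" using zu e p_def by (simp add: algebra_simps)
    hence "z - p \<in> B" using u x sB by (simp add: subspace_add)
    moreover have "z - p = v - y" using zv p_def by (simp add: algebra_simps)
    hence "z - p \<in> A" using v y sA by (simp add: subspace_diff)
    ultimately have "z - p \<in> B \<inter> A" by blast
    then show "z \<in> (+) p ` (B \<inter> A)" by (rule rev_image_eqI) simp
  next
    fix z assume "z \<in> (+) p ` (B \<inter> A)"
    then obtain w where w: "w \<in> B" "w \<in> A" and z: "z = p + w" by blast
    have "w - x \<in> B" using w x sB by (simp add: subspace_diff)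
    moreover have "z = (w - x) + c" using z e p_def by (simp add: algebra_simps)
    ultimately have 1: "z \<in> (\<lambda>x. x + c) ` B" by blast
    have "w + y \<in> A" using w y sA by (simp add: subspace_add)
    moreover have "z = (w + y) + b" using z p_def by (simp add: algebra_simps)
    ultimately have 2: "z \<in> (\<lambda>x. x + b) ` A" by blast
    show "z \<in> (\<lambda>x. x + c) ` B \<inter> (\<lambda>x. x + b) ` A" using 1 2 by blast
  qed
  have "aff_dim ((+) p ` (B \<inter> A)) = int (dim (B \<inter> A))"
    unfolding aff_dim_translation_eq by (rule aff_dim_subspace[OF subspace_inter[OF sB sA]])
  then show "aff_dim ((\<lambda>x. x + c) ` B \<inter> (\<lambda>x. x + b) ` A) \<ge> int j" using eq d by simp
qed

theorem lemma7p5: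
  fixes A :: "nat \<Rightarrow> 'a::euclidean_space set" and B :: "'a set" and b :: 'a and k :: nat
  assumes "\<forall>j\<in>{1..k}. subspace (A j)"
    and "\<forall>j\<in>{1..<k}. A j \<subseteq> A (Suc j)"
    and "B \<in> Schubert_Omega k A"
  shows "convex (tau_fiber_vectors k A b B) \<and> contractible (tau_fiber_vectors k A b B)"
proof -
  have sB: "subspace B" and d: "\<forall>j\<in>{1..k}. dim (B \<inter> A j) \<ge> j"
    using assms(3) by (auto simp: Schubert_Omega_def Gr_def)
  have eq: "tau_fiber_vectors k A b B = (\<Inter>j\<in>{1..k}. (+) b ` {x + y |x y. x \<in> B \<and> y \<in> A j})"
  proof -
    have 1: "\<And>c j. j \<in> {1..k} \<Longrightarrow> (c \<in> (+) b ` {x + y |x y. x \<in> B \<and> y \<in> A j}) = (c - b \<in> {x + y |x y. x \<in> B \<and> y \<in> A j})"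
    proof
      fix c j assume "c \<in> (+) b ` {x + y |x y. x \<in> B \<and> y \<in> A j}"
      then obtain x y where "x \<in> B" "y \<in> A j" "c = b + (x + y)" by blast
      then show "c - b \<in> {x + y |x y. x \<in> B \<and> y \<in> A j}" by auto
    next
      fix c j assume h: "c - b \<in> {x + y |x y. x \<in> B \<and> y \<in> A j}"
      have "c = b + (c - b)" by simp
      with h show "c \<in> (+) b ` {x + y |x y. x \<in> B \<and> y \<in> A j}" by blast
    qed
    have 2: "\<And>c j. j \<in> {1..k} \<Longrightarrow> (aff_dim ((\<lambda>x. x + c) ` B \<inter> (\<lambda>x. x + b) ` A j) \<ge> int j) = (c - b \<in> {x + y |x y. x \<in> B \<and> y \<in> A j})"
      using key[OF sB] assms(1) d by simp
    show ?thesis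
    proof (rule set_eqI)
      fix c
      have "c \<in> tau_fiber_vectors k A b B \<longleftrightarrow> (\<forall>j\<in>{1..k}. aff_dim ((\<lambda>x. x + c) ` B \<inter> (\<lambda>x. x + b) ` A j) \<ge> int j)"
        unfolding tau_fiber_vectors_def by (rule mem_Collect_eq)
      also have "\<dots> \<longleftrightarrow> (\<forall>j\<in>{1..k}. c \<in> (+) b ` {x + y |x y. x \<in> B \<and> y \<in> A j})"
      proof (rule ball_cong[OF refl])
        fix j assume j: "j \<in> {1..k}"
        show "(aff_dim ((\<lambda>x. x + c) ` B \<inter> (\<lambda>x. x + b) ` A j) \<ge> int j) = (c \<in> (+) b ` {x + y |x y. x \<in> B \<and> y \<in> A j})"
          using 1[OF j, of c] 2[OF j, of c] by (simp only:)
      qed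
      also have "\<dots> \<longleftrightarrow> c \<in> (\<Inter>j\<in>{1..k}. (+) b ` {x + y |x y. x \<in> B \<and> y \<in> A j})"
        by (rule INT_iff[symmetric])
      finally show "c \<in> tau_fiber_vectors k A b B \<longleftrightarrow> c \<in> (\<Inter>j\<in>{1..k}. (+) b ` {x + y |x y. x \<in> B \<and> y \<in> A j})" .
    qed
  qed
  have "convex (tau_fiber_vectors k A b B)"
  proof -
    have "\<And>j. j \<in> {1..k} \<Longrightarrow> convex ((+) b ` {x + y |x y. x \<in> B \<and> y \<in> A j})"
    proof -
      fix j assume j: "j \<in> {1..k}"
      have "subspace {x + y |x y. x \<in> B \<and> y \<in> A j}"
        using subspace_sums[OF sB] assms(1) j by blast
      then show "convex ((+) b ` {x + y |x y. x \<in> B \<and> y \<in> A j})"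
        unfolding convex_translation_eq by (rule subspace_imp_convex)
    qed
    then have "convex (\<Inter>j\<in>{1..k}. (+) b ` {x + y |x y. x \<in> B \<and> y \<in> A j})" by (rule convex_INT)
    then show ?thesis unfolding eq .
  qed
  then show ?thesis using convex_imp_contractible by blast
qed

end
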